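(* Let $p \ge 2$, let $X \in L^p$ be a real valued random variable, and let $0 < r \le 2 \le s \le p$. Then $$\operatorname{Var}(X_+^{r/2})^{2/r} + \operatorname{Var}(X_-^{r/2})^{2/r} \le \operatorname{Var}(X) \le 2\left(\operatorname{Var}(X_+^{s/2})^{2/s} + \operatorname{Var}(X_-^{s/2})^{2/s}\right).$$
   Context: $X_+ = \max\{X,0\}$ and $X_- = -\min\{X,0\}$ are the positive and negative parts of $X$; $\operatorname{Var}(Y) = E(Y^2)-(EY)^2$. *)

theory Defs
  imports "HOL-Probability.Probability"
begin

definition pos_part :: "('a \<Rightarrow> real) \<Rightarrow> 'a \<Rightarrow> real" where
  "pos_part X = (\<lambda>\<omega>. max (X \<omega>) 0)"

definition neg_part :: "('a \<Rightarrow> real) \<Rightarrow> 'a \<Rightarrow> real" where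
  "neg_part X = (\<lambda>\<omega>. - min (X \<omega>) 0)"

definition Var :: "'a measure \<Rightarrow> ('a \<Rightarrow> real) \<Rightarrow> real" where
  "Var M Y = (\<integral>\<omega>. (Y \<omega>)^2 \<partial>M) - (\<integral>\<omega>. Y \<omega> \<partial>M)^2"

end

theory Submission
  imports Defs
begin


lemma superadd_le1:
  fixes u v a :: real
  assumes "0 \<le> u" "0 \<le> v" "0 < a" "a \<le> 1"
  shows "(u+v) powr a \<le> u powr a + v powr a"
proof (cases "u + v = 0")
  case True then show ?thesis using assms by auto
next
  case False
  define t where "t = u + v"
  have t: "t > 0" using False assms t_def by auto
  have "u/t \<le> (u/t) powr a"
    using powr_mono'[of a 1 "u/t"] assms t t_def by (simp add: divide_le_eq_1)
  moreover have "v/t \<le> (v/t) powr a"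
    using powr_mono'[of a 1 "v/t"] assms t t_def by (simp add: divide_le_eq_1)
  moreover have "u/t + v/t = 1" using t t_def by (simp add: add_divide_distrib[symmetric])
  ultimately have "1 \<le> (u/t) powr a + (v/t) powr a" by linarith
  hence "t powr a * 1 \<le> t powr a * ((u/t) powr a + (v/t) powr a)"
    by (intro mult_left_mono) auto
  also have "\<dots> = u powr a + v powr a"
    using t assms by (simp add: powr_divide distrib_left)
  finally show ?thesis using t_def by simp
qed

lemma superadd_ge1:
  fixes u v a :: real
  assumes "0 \<le> u" "0 \<le> v" "1 \<le> a"
  shows "u powr a + v powr a \<le> (u+v) powr a"
proof (cases "u + v = 0")
  case True then have "u = 0" "v = 0" using assms by auto
  then show ?thesis by simp
next
  case False
  define t where "t = u + v"
  have t: "t > 0" using False assms t_def by auto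
  have "(u/t) powr a \<le> u/t"
    using powr_mono'[of 1 a "u/t"] assms t t_def by (simp add: divide_le_eq_1)
  moreover have "(v/t) powr a \<le> v/t"
    using powr_mono'[of 1 a "v/t"] assms t t_def by (simp add: divide_le_eq_1)
  moreover have "u/t + v/t = 1" using t t_def by (simp add: add_divide_distrib[symmetric])
  ultimately have "(u/t) powr a + (v/t) powr a \<le> 1" by linarith
  hence "t powr a * ((u/t) powr a + (v/t) powr a) \<le> t powr a * 1"
    by (intro mult_left_mono) auto
  also have "t powr a * ((u/t) powr a + (v/t) powr a) = u powr a + v powr a"
    using t assms by (simp add: powr_divide distrib_left)
  finally show ?thesis using t_def by simp
qed

lemma powdiff_le1:
  fixes x y a :: real
  assumes "0 \<le> x" "0 \<le> y" "0 < a" "a \<le> 1"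
  shows "\<bar>x powr a - y powr a\<bar> \<le> \<bar>x - y\<bar> powr a"
proof -
  have *: "\<bar>x powr a - y powr a\<bar> \<le> \<bar>x - y\<bar> powr a" if "0 \<le> y" "y \<le> x" for x y
  proof -
    have "x powr a \<le> (x - y) powr a + y powr a"
      using superadd_le1[of "x-y" y a] that assms by simp
    moreover have "y powr a \<le> x powr a" using powr_mono2[of a y x] that assms by simp
    ultimately show ?thesis using that by simp
  qed
  show ?thesis
  proof (cases "y \<le> x")
    case True then show ?thesis using * assms by blast
  next
    case False then show ?thesis using *[of x y] assms by (simp add: abs_minus_commute)
  qed
qed

lemma powdiff_ge1:
  fixes x y a :: real
  assumes "0 \<le> x" "0 \<le> y" "1 \<le> a"
  shows "\<bar>x - y\<bar> powr a \<le> \<bar>x powr a - y powr a\<bar>"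
proof -
  have *: "\<bar>x - y\<bar> powr a \<le> \<bar>x powr a - y powr a\<bar>" if "0 \<le> y" "y \<le> x" for x y
  proof -
    have "(x - y) powr a + y powr a \<le> x powr a"
      using superadd_ge1[of "x-y" y a] that assms by simp
    moreover have "y powr a \<le> x powr a" using powr_mono2[of a y x] that assms by simp
    ultimately show ?thesis using that by simp
  qed
  show ?thesis
  proof (cases "y \<le> x")
    case True then show ?thesis using * assms by blast
  next
    case False then show ?thesis using *[of x y] assms by (simp add: abs_minus_commute)
  qed
qed

lemma tangent_le1:
  fixes x m a :: real
  assumes "0 \<le> x" "0 < m" "0 < a" "a \<le> 1"
  shows "x powr a \<le> m powr a + a * m powr (a - 1) * (x - m)"
proof -
  have "(x/m) powr a \<le> a * (x/m) + (1 - a)"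
  proof (cases "x = 0")
    case True then show ?thesis using assms by simp
  next
    case False
    then show ?thesis using Youngs_inequality_0[of a "1-a" "x/m" 1] assms by simp
  qed
  hence "m powr a * (x/m) powr a \<le> m powr a * (a * (x/m) + (1 - a))"
    by (intro mult_left_mono) auto
  moreover have "m powr a * (x/m) powr a = x powr a" using assms by (simp add: powr_divide)
  moreover have "m powr a * (a * (x/m) + (1 - a)) = m powr a + a * m powr (a - 1) * (x - m)"
    using assms by (simp add: powr_diff field_simps)
  ultimately show ?thesis by simp
qed

lemma tangent_ge1:
  fixes x m a :: real
  assumes "0 \<le> x" "0 < m" "1 \<le> a"
  shows "m powr a + a * m powr (a - 1) * (x - m) \<le> x powr a"
proof -
  have "1 + a * (x/m - 1) \<le> (x/m) powr a"
  proof -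
    define y where "y = (x/m) powr a"
    have y0: "y \<ge> 0" using y_def by simp
    have "y powr (1/a) = x/m" using assms y_def by (simp add: powr_powr)
    moreover have "y powr (1/a) \<le> 1/a * y + (1 - 1/a)"
    proof (cases "y = 0")
      case True then show ?thesis using assms by simp
    next
      case False
      then show ?thesis using Youngs_inequality_0[of "1/a" "1-1/a" y 1] assms y0 by simp
    qed
    ultimately have "x/m \<le> 1/a * y + (1 - 1/a)" by simp
    hence "a * (x/m) \<le> a * (1/a * y + (1 - 1/a))" using assms by (intro mult_left_mono) auto
    also have "\<dots> = y + a - 1" using assms by (simp add: field_simps)
    finally show ?thesis using y_def by (simp add: algebra_simps)
  qed
  hence "m powr a * (1 + a * (x/m - 1)) \<le> m powr a * (x/m) powr a"
    by (intro mult_left_mono) auto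
  moreover have "m powr a * (x/m) powr a = x powr a" using assms by (simp add: powr_divide)
  moreover have "m powr a * (1 + a * (x/m - 1)) = m powr a + a * m powr (a - 1) * (x - m)"
    using assms by (simp add: powr_diff field_simps)
  ultimately show ?thesis by simp
qed



lemma pow_le_1_plus:
  fixes x q p :: real
  assumes "0 \<le> q" "q \<le> p"
  shows "\<bar>x\<bar> powr q \<le> 1 + \<bar>x\<bar> powr p"
proof (cases "\<bar>x\<bar> \<le> 1")
  case True
  then have "\<bar>x\<bar> powr q \<le> 1" using powr_le1[of q "\<bar>x\<bar>"] assms by simp
  then show ?thesis by (smt (verit) powr_ge_zero)
next
  case False
  then have "\<bar>x\<bar> powr q \<le> \<bar>x\<bar> powr p" using powr_mono[of q p "\<bar>x\<bar>"] assms by simp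
  then show ?thesis by simp
qed

lemma sum_powr_le:
  fixes u v q :: real
  assumes "0 \<le> u" "0 \<le> v" "0 \<le> q"
  shows "(u + v) powr q \<le> 2 powr q * (u powr q + v powr q)"
proof -
  have "(u + v) powr q \<le> (2 * max u v) powr q"
    using assms by (intro powr_mono2) auto
  also have "\<dots> = 2 powr q * (max u v) powr q" using assms by (simp add: powr_mult)
  also have "(max u v) powr q \<le> u powr q + v powr q"
    by (cases "u \<le> v") (auto simp: max_def)
  hence "2 powr q * (max u v) powr q \<le> 2 powr q * (u powr q + v powr q)"
    by (intro mult_left_mono) auto
  finally show ?thesis .
qed

context prob_space
begin

lemma int_bound:
  fixes X f :: "'a \<Rightarrow> real" and p q C D :: real
  assumes X: "integrable M (\<lambda>\<omega>. \<bar>X \<omega>\<bar> powr p)"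
    and q: "0 \<le> q" "q \<le> p" and f: "f \<in> borel_measurable M"
    and C: "0 \<le> C" "0 \<le> D"
    and b: "\<And>\<omega>. \<omega> \<in> space M \<Longrightarrow> \<bar>f \<omega>\<bar> \<le> C + D * \<bar>X \<omega>\<bar> powr q"
  shows "integrable M f"
proof (rule Bochner_Integration.integrable_bound[where f="\<lambda>\<omega>. (C + D) + D * \<bar>X \<omega>\<bar> powr p"])
  show "integrable M (\<lambda>\<omega>. (C + D) + D * \<bar>X \<omega>\<bar> powr p)"
    by (intro Bochner_Integration.integrable_add integrable_mult_right X) auto
  show "f \<in> borel_measurable M" by fact
  show "AE x in M. norm (f x) \<le> norm (C + D + D * \<bar>X x\<bar> powr p)"
  proof (rule AE_I2)
    fix x assume x: "x \<in> space M"
    have "D * \<bar>X x\<bar> powr q \<le> D * (1 + \<bar>X x\<bar> powr p)"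
      using pow_le_1_plus[of q p "X x"] q C by (intro mult_left_mono) auto
    then show "norm (f x) \<le> norm (C + D + D * \<bar>X x\<bar> powr p)"
      using b[OF x] C by (simp add: algebra_simps)
  qed
qed

lemma Var_shift:
  fixes W :: "'a \<Rightarrow> real" and c :: real
  assumes W: "integrable M W" "integrable M (\<lambda>\<omega>. (W \<omega>)^2)"
  shows "Var M W = (\<integral>\<omega>. (W \<omega> - c)^2 \<partial>M) - ((\<integral>\<omega>. W \<omega> \<partial>M) - c)^2"
proof -
  have "(\<integral>\<omega>. (W \<omega> - c)^2 \<partial>M) = (\<integral>\<omega>. ((W \<omega>)^2 - 2 * c * W \<omega>) + c^2 \<partial>M)"
    by (intro Bochner_Integration.integral_cong) (auto simp: power2_eq_square algebra_simps)
  also have "\<dots> = (\<integral>\<omega>. (W \<omega>)^2 \<partial>M) - 2 * c * (\<integral>\<omega>. W \<omega> \<partial>M) + c^2"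
    using W by (simp add: prob_space)
  finally show ?thesis unfolding Var_def by (simp add: power2_eq_square algebra_simps)
qed

lemma Var_nonneg:
  fixes W :: "'a \<Rightarrow> real"
  assumes W: "integrable M W" "integrable M (\<lambda>\<omega>. (W \<omega>)^2)"
  shows "0 \<le> Var M W"
  using Var_shift[OF W, of "\<integral>\<omega>. W \<omega> \<partial>M"] by simp

lemma jensen_le1:
  fixes V :: "'a \<Rightarrow> real" and a :: real
  assumes V: "integrable M V" "integrable M (\<lambda>\<omega>. V \<omega> powr a)"
    and nn: "\<And>\<omega>. \<omega> \<in> space M \<Longrightarrow> 0 \<le> V \<omega>"
    and a: "0 < a" "a \<le> 1"
  shows "(\<integral>\<omega>. V \<omega> powr a \<partial>M) \<le> (\<integral>\<omega>. V \<omega> \<partial>M) powr a"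
proof -
  define m where "m = (\<integral>\<omega>. V \<omega> \<partial>M)"
  have m0: "0 \<le> m" using nn unfolding m_def by (intro Bochner_Integration.integral_nonneg) auto
  show ?thesis
  proof (cases "m = 0")
    case True
    then have "AE \<omega> in M. V \<omega> = 0"
      using integral_nonneg_eq_0_iff_AE[OF V(1)] nn m_def by (auto intro: AE_I2)
    then have "AE \<omega> in M. V \<omega> powr a = 0" by eventually_elim simp
    then have "(\<integral>\<omega>. V \<omega> powr a \<partial>M) = (\<integral>\<omega>. 0 \<partial>M)"
      by (intro integral_cong_AE borel_measurable_integrable[OF V(2)]) auto
    then show ?thesis using True m_def by simp
  next
    case False
    then have mp: "0 < m" using m0 by simp
    have "(\<integral>\<omega>. V \<omega> powr a \<partial>M) \<le> (\<integral>\<omega>. m powr a + a * m powr (a - 1) * (V \<omega> - m) \<partial>M)"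
      using V nn tangent_le1[OF _ mp a]
      by (intro integral_mono) auto
    also have "\<dots> = m powr a + a * m powr (a - 1) * ((\<integral>\<omega>. V \<omega> \<partial>M) - m)"
      using V by (simp add: prob_space)
    finally show ?thesis using m_def by simp
  qed
qed

lemma jensen_ge1:
  fixes V :: "'a \<Rightarrow> real" and a :: real
  assumes V: "integrable M V" "integrable M (\<lambda>\<omega>. V \<omega> powr a)"
    and nn: "\<And>\<omega>. \<omega> \<in> space M \<Longrightarrow> 0 \<le> V \<omega>"
    and a: "1 \<le> a"
  shows "(\<integral>\<omega>. V \<omega> \<partial>M) powr a \<le> (\<integral>\<omega>. V \<omega> powr a \<partial>M)"
proof -
  define m where "m = (\<integral>\<omega>. V \<omega> \<partial>M)"
  have m0: "0 \<le> m" using nn unfolding m_def by (intro Bochner_Integration.integral_nonneg) auto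
  show ?thesis
  proof (cases "m = 0")
    case True
    then show ?thesis using m_def nn by simp
  next
    case False
    then have mp: "0 < m" using m0 by simp
    have "m powr a + a * m powr (a - 1) * ((\<integral>\<omega>. V \<omega> \<partial>M) - m)
        = (\<integral>\<omega>. m powr a + a * m powr (a - 1) * (V \<omega> - m) \<partial>M)"
      using V by (simp add: prob_space)
    also have "\<dots> \<le> (\<integral>\<omega>. V \<omega> powr a \<partial>M)"
      using V nn tangent_ge1[OF _ mp a]
      by (intro integral_mono) auto
    finally show ?thesis using m_def by simp
  qed
qed

end


lemma sq_powr: "((t::real)^2) powr a = \<bar>t\<bar> powr (2*a)"
proof -
  have "t^2 = \<bar>t\<bar> powr 2" by simp
  then show ?thesis by (metis powr_powr)
qed

lemma powr_sq: "(\<bar>t::real\<bar> powr a)^2 = \<bar>t\<bar> powr (2*a)"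
  by (simp add: power2_eq_square powr_add[symmetric])

lemma nonneg_powr_sq: "0 \<le> (y::real) \<Longrightarrow> (y powr a)^2 = y powr (2*a)"
  using powr_sq[of y a] by simp

lemma sq_diff_le: "((u::real) - v)^2 \<le> 2 * u^2 + 2 * v^2"
proof -
  have eq: "2 * u^2 + 2 * v^2 = (u - v)^2 + (u + v)^2" by (simp add: power2_eq_square algebra_simps)
  show ?thesis using eq zero_le_power2[of "u+v"] by linarith
qed

context prob_space
begin

lemma main_small:
  fixes X Y :: "'a \<Rightarrow> real" and p a :: real
  assumes X: "integrable M (\<lambda>\<omega>. \<bar>X \<omega>\<bar> powr p)" and p: "2 \<le> p"
    and Ym[measurable]: "Y \<in> borel_measurable M"
    and Yb: "\<And>\<omega>. \<omega> \<in> space M \<Longrightarrow> 0 \<le> Y \<omega> \<and> Y \<omega> \<le> \<bar>X \<omega>\<bar>"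
    and a: "0 < a" "a \<le> 1"
  shows "Var M (\<lambda>\<omega>. Y \<omega> powr a) powr (1/a) \<le> Var M Y"
proof -
  define m where "m = (\<integral>\<omega>. Y \<omega> \<partial>M)"
  have m0: "0 \<le> m" using Yb unfolding m_def by (intro Bochner_Integration.integral_nonneg) auto
  have iY: "integrable M Y"
  proof (rule int_bound[OF X, of 1 _ 0 1])
    fix \<omega> assume "\<omega> \<in> space M" then show "\<bar>Y \<omega>\<bar> \<le> 0 + 1 * \<bar>X \<omega>\<bar> powr 1"
      using Yb by (simp add: powr_one)
  qed (use p in auto)
  have iY2: "integrable M (\<lambda>\<omega>. (Y \<omega>)^2)"
  proof (rule int_bound[OF X, of 2 _ 0 1])
    fix \<omega> assume "\<omega> \<in> space M" then show "\<bar>(Y \<omega>)^2\<bar> \<le> 0 + 1 * \<bar>X \<omega>\<bar> powr 2"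
      using Yb[of \<omega>] power_mono[of "Y \<omega>" "\<bar>X \<omega>\<bar>" 2] by simp
  qed (use p in auto)
  have iW: "integrable M (\<lambda>\<omega>. Y \<omega> powr a)"
  proof (rule int_bound[OF X, of a _ 0 1])
    fix \<omega> assume "\<omega> \<in> space M" then show "\<bar>Y \<omega> powr a\<bar> \<le> 0 + 1 * \<bar>X \<omega>\<bar> powr a"
      using Yb a by (simp add: powr_mono2)
  qed (use p a in auto)
  have iW2: "integrable M (\<lambda>\<omega>. (Y \<omega> powr a)^2)"
  proof (rule int_bound[OF X, of "2*a" _ 0 1])
    fix \<omega> assume "\<omega> \<in> space M" then show "\<bar>(Y \<omega> powr a)^2\<bar> \<le> 0 + 1 * \<bar>X \<omega>\<bar> powr (2*a)"
      using Yb a by (simp add: nonneg_powr_sq powr_mono2)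
  qed (use p a in auto)
  have iD: "integrable M (\<lambda>\<omega>. (Y \<omega> powr a - m powr a)^2)"
  proof (rule int_bound[OF X, of "2*a" _ "2*(m powr a)^2" 2])
    fix \<omega> assume w: "\<omega> \<in> space M"
    have "(Y \<omega> powr a - m powr a)^2 \<le> 2*(Y \<omega> powr a)^2 + 2*(m powr a)^2" by (rule sq_diff_le)
    moreover have "(Y \<omega> powr a)^2 \<le> \<bar>X \<omega>\<bar> powr (2*a)"
      using Yb[OF w] a by (simp add: nonneg_powr_sq powr_mono2)
    ultimately show "\<bar>(Y \<omega> powr a - m powr a)^2\<bar> \<le> 2*(m powr a)^2 + 2 * \<bar>X \<omega>\<bar> powr (2*a)"
      by simp
  qed (use p a in auto)
  have iV: "integrable M (\<lambda>\<omega>. (Y \<omega> - m)^2)"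
    using iY2 iY by (simp add: power2_diff prob_space)
  have iVa: "integrable M (\<lambda>\<omega>. ((Y \<omega> - m)^2) powr a)"
  proof (rule int_bound[OF X, of "2*a" _ "2 powr (2*a) * m powr (2*a)" "2 powr (2*a)"])
    fix \<omega> assume w: "\<omega> \<in> space M"
    have "((Y \<omega> - m)^2) powr a = \<bar>Y \<omega> - m\<bar> powr (2*a)" by (rule sq_powr)
    also have "\<dots> \<le> (\<bar>X \<omega>\<bar> + m) powr (2*a)"
      using Yb[OF w] m0 a by (intro powr_mono2) auto
    also have "\<dots> \<le> 2 powr (2*a) * (\<bar>X \<omega>\<bar> powr (2*a) + m powr (2*a))"
      using m0 a by (intro sum_powr_le) auto
    finally show "\<bar>((Y \<omega> - m)^2) powr a\<bar> \<le> 2 powr (2*a) * m powr (2*a) + 2 powr (2*a) * \<bar>X \<omega>\<bar> powr (2*a)"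
      by (simp add: algebra_simps)
  qed (use p a in auto)
  have vW0: "0 \<le> Var M (\<lambda>\<omega>. Y \<omega> powr a)" using Var_nonneg[OF iW iW2] .
  have "Var M (\<lambda>\<omega>. Y \<omega> powr a) \<le> (\<integral>\<omega>. (Y \<omega> powr a - m powr a)^2 \<partial>M)"
    using Var_shift[OF iW iW2, of "m powr a"] by simp
  also have "\<dots> \<le> (\<integral>\<omega>. ((Y \<omega> - m)^2) powr a \<partial>M)"
  proof (rule integral_mono[OF iD iVa])
    fix \<omega> assume w: "\<omega> \<in> space M"
    have "\<bar>Y \<omega> powr a - m powr a\<bar> \<le> \<bar>Y \<omega> - m\<bar> powr a"
      using Yb[OF w] m0 a by (intro powdiff_le1) auto
    then have "\<bar>Y \<omega> powr a - m powr a\<bar>^2 \<le> (\<bar>Y \<omega> - m\<bar> powr a)^2"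
      by (intro power_mono) auto
    then show "(Y \<omega> powr a - m powr a)^2 \<le> ((Y \<omega> - m)^2) powr a"
      by (simp add: sq_powr powr_sq)
  qed
  also have "\<dots> \<le> (\<integral>\<omega>. (Y \<omega> - m)^2 \<partial>M) powr a"
    using a by (intro jensen_le1[OF iV iVa]) auto
  also have "(\<integral>\<omega>. (Y \<omega> - m)^2 \<partial>M) = Var M Y"
    using Var_shift[OF iY iY2, of m] m_def by simp
  finally have "Var M (\<lambda>\<omega>. Y \<omega> powr a) \<le> Var M Y powr a" .
  then have "Var M (\<lambda>\<omega>. Y \<omega> powr a) powr (1/a) \<le> (Var M Y powr a) powr (1/a)"
    using vW0 a by (intro powr_mono2) auto
  also have "\<dots> = Var M Y" using a Var_nonneg[OF iY iY2] by (simp add: powr_powr powr_one)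
  finally show ?thesis .
qed

lemma main_large:
  fixes X Y :: "'a \<Rightarrow> real" and p a :: real
  assumes X: "integrable M (\<lambda>\<omega>. \<bar>X \<omega>\<bar> powr p)" and p: "2*a \<le> p"
    and Ym[measurable]: "Y \<in> borel_measurable M"
    and Yb: "\<And>\<omega>. \<omega> \<in> space M \<Longrightarrow> 0 \<le> Y \<omega> \<and> Y \<omega> \<le> \<bar>X \<omega>\<bar>"
    and a: "1 \<le> a"
  shows "Var M Y \<le> Var M (\<lambda>\<omega>. Y \<omega> powr a) powr (1/a)"
proof -
  define \<mu> where "\<mu> = (\<integral>\<omega>. Y \<omega> powr a \<partial>M)"
  have m0: "0 \<le> \<mu>" unfolding \<mu>_def by (intro Bochner_Integration.integral_nonneg) auto
  define c where "c = \<mu> powr (1/a)"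
  have c0: "0 \<le> c" using c_def by simp
  have ca: "c powr a = \<mu>" using a m0 by (simp add: c_def powr_powr powr_one)
  have iY: "integrable M Y"
  proof (rule int_bound[OF X, of 1 _ 0 1])
    fix \<omega> assume "\<omega> \<in> space M" then show "\<bar>Y \<omega>\<bar> \<le> 0 + 1 * \<bar>X \<omega>\<bar> powr 1"
      using Yb by (simp add: powr_one)
  qed (use p a in auto)
  have iY2: "integrable M (\<lambda>\<omega>. (Y \<omega>)^2)"
  proof (rule int_bound[OF X, of 2 _ 0 1])
    fix \<omega> assume "\<omega> \<in> space M" then show "\<bar>(Y \<omega>)^2\<bar> \<le> 0 + 1 * \<bar>X \<omega>\<bar> powr 2"
      using Yb[of \<omega>] power_mono[of "Y \<omega>" "\<bar>X \<omega>\<bar>" 2] by simp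
  qed (use p a in auto)
  have iW: "integrable M (\<lambda>\<omega>. Y \<omega> powr a)"
  proof (rule int_bound[OF X, of a _ 0 1])
    fix \<omega> assume "\<omega> \<in> space M" then show "\<bar>Y \<omega> powr a\<bar> \<le> 0 + 1 * \<bar>X \<omega>\<bar> powr a"
      using Yb a by (simp add: powr_mono2)
  qed (use p a in auto)
  have iW2: "integrable M (\<lambda>\<omega>. (Y \<omega> powr a)^2)"
  proof (rule int_bound[OF X, of "2*a" _ 0 1])
    fix \<omega> assume "\<omega> \<in> space M" then show "\<bar>(Y \<omega> powr a)^2\<bar> \<le> 0 + 1 * \<bar>X \<omega>\<bar> powr (2*a)"
      using Yb a by (simp add: nonneg_powr_sq powr_mono2)
  qed (use p a in auto)
  have iD: "integrable M (\<lambda>\<omega>. (Y \<omega> powr a - \<mu>)^2)"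
    using iW2 iW by (simp add: power2_diff prob_space)
  have iV: "integrable M (\<lambda>\<omega>. (Y \<omega> - c)^2)"
    using iY2 iY by (simp add: power2_diff prob_space)
  have iVa: "integrable M (\<lambda>\<omega>. ((Y \<omega> - c)^2) powr a)"
  proof (rule int_bound[OF X, of "2*a" _ "2 powr (2*a) * c powr (2*a)" "2 powr (2*a)"])
    fix \<omega> assume w: "\<omega> \<in> space M"
    have "((Y \<omega> - c)^2) powr a = \<bar>Y \<omega> - c\<bar> powr (2*a)" by (rule sq_powr)
    also have "\<dots> \<le> (\<bar>X \<omega>\<bar> + c) powr (2*a)"
      using Yb[OF w] c0 a by (intro powr_mono2) auto
    also have "\<dots> \<le> 2 powr (2*a) * (\<bar>X \<omega>\<bar> powr (2*a) + c powr (2*a))"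
      using c0 a by (intro sum_powr_le) auto
    finally show "\<bar>((Y \<omega> - c)^2) powr a\<bar> \<le> 2 powr (2*a) * c powr (2*a) + 2 powr (2*a) * \<bar>X \<omega>\<bar> powr (2*a)"
      by (simp add: algebra_simps)
  qed (use p a in auto)
  have vY0: "0 \<le> Var M Y" using Var_nonneg[OF iY iY2] .
  have "Var M Y \<le> (\<integral>\<omega>. (Y \<omega> - c)^2 \<partial>M)"
    using Var_shift[OF iY iY2, of c] by simp
  then have "Var M Y powr a \<le> (\<integral>\<omega>. (Y \<omega> - c)^2 \<partial>M) powr a"
    using vY0 a by (intro powr_mono2) auto
  also have "\<dots> \<le> (\<integral>\<omega>. ((Y \<omega> - c)^2) powr a \<partial>M)"
    using a by (intro jensen_ge1[OF iV iVa]) auto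
  also have "\<dots> \<le> (\<integral>\<omega>. (Y \<omega> powr a - \<mu>)^2 \<partial>M)"
  proof (rule integral_mono[OF iVa iD])
    fix \<omega> assume w: "\<omega> \<in> space M"
    have "\<bar>Y \<omega> - c\<bar> powr a \<le> \<bar>Y \<omega> powr a - c powr a\<bar>"
      using Yb[OF w] c0 a by (intro powdiff_ge1) auto
    then have "(\<bar>Y \<omega> - c\<bar> powr a)^2 \<le> \<bar>Y \<omega> powr a - c powr a\<bar>^2"
      by (intro power_mono) auto
    then show "((Y \<omega> - c)^2) powr a \<le> (Y \<omega> powr a - \<mu>)^2"
      by (simp add: sq_powr powr_sq ca)
  qed
  also have "\<dots> = Var M (\<lambda>\<omega>. Y \<omega> powr a)"
    using Var_shift[OF iW iW2, of \<mu>] \<mu>_def by simp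
  finally have "Var M Y powr a \<le> Var M (\<lambda>\<omega>. Y \<omega> powr a)" .
  then have "(Var M Y powr a) powr (1/a) \<le> Var M (\<lambda>\<omega>. Y \<omega> powr a) powr (1/a)"
    using a by (intro powr_mono2) auto
  moreover have "(Var M Y powr a) powr (1/a) = Var M Y" using a vY0 by (simp add: powr_powr powr_one)
  ultimately show ?thesis by simp
qed

end


theorem corollary3p3:
  fixes M :: "'a measure" and X :: "'a \<Rightarrow> real" and p r s :: real
  assumes "prob_space M"
    and "p \<ge> 2"
    and "X \<in> borel_measurable M"
    and "integrable M (\<lambda>\<omega>. \<bar>X \<omega>\<bar> powr p)"
    and "0 < r" and "r \<le> 2" and "2 \<le> s" and "s \<le> p"
  shows "Var M (\<lambda>\<omega>. pos_part X \<omega> powr (r/2)) powr (2/r)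
           + Var M (\<lambda>\<omega>. neg_part X \<omega> powr (r/2)) powr (2/r)
         \<le> Var M X \<and>
         Var M X \<le> 2 * (Var M (\<lambda>\<omega>. pos_part X \<omega> powr (s/2)) powr (2/s)
           + Var M (\<lambda>\<omega>. neg_part X \<omega> powr (s/2)) powr (2/s))"
proof -
  interpret P: prob_space M by fact
  note Xm[measurable] = assms(3)
  note Xi = assms(4)
  define Y where "Y = pos_part X"
  define Z where "Z = neg_part X"
  have Ym[measurable]: "Y \<in> borel_measurable M" unfolding Y_def pos_part_def by measurable
  have Zm[measurable]: "Z \<in> borel_measurable M" unfolding Z_def neg_part_def by measurable
  have Yb: "\<And>\<omega>. 0 \<le> Y \<omega> \<and> Y \<omega> \<le> \<bar>X \<omega>\<bar>" unfolding Y_def pos_part_def by auto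
  have Zb: "\<And>\<omega>. 0 \<le> Z \<omega> \<and> Z \<omega> \<le> \<bar>X \<omega>\<bar>" unfolding Z_def neg_part_def by auto
  have XYZ: "\<And>\<omega>. X \<omega> = Y \<omega> - Z \<omega>" unfolding Y_def Z_def pos_part_def neg_part_def by auto
  have X2: "\<And>\<omega>. (X \<omega>)^2 = (Y \<omega>)^2 + (Z \<omega>)^2"
    unfolding Y_def Z_def pos_part_def neg_part_def by (auto simp: max_def min_def)
  have aX: "\<And>\<omega>. \<bar>X \<omega>\<bar> = Y \<omega> + Z \<omega>" unfolding Y_def Z_def pos_part_def neg_part_def by auto
  have aX2: "\<And>\<omega>. \<bar>X \<omega>\<bar>^2 = (X \<omega>)^2" by simp
  have i1: "integrable M W" if "W \<in> borel_measurable M" "\<And>\<omega>. \<bar>W \<omega>\<bar> \<le> \<bar>X \<omega>\<bar>" for W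
  proof (rule P.int_bound[OF Xi, of 1 _ 0 1])
    fix \<omega> show "\<bar>W \<omega>\<bar> \<le> 0 + 1 * \<bar>X \<omega>\<bar> powr 1" using that by (simp add: powr_one)
  qed (use that(1) assms(2) in simp_all)
  have i2: "integrable M (\<lambda>\<omega>. (W \<omega>)^2)" if "W \<in> borel_measurable M" "\<And>\<omega>. \<bar>W \<omega>\<bar> \<le> \<bar>X \<omega>\<bar>" for W
  proof (rule P.int_bound[OF Xi, of 2 _ 0 1])
    fix \<omega> show "\<bar>(W \<omega>)^2\<bar> \<le> 0 + 1 * \<bar>X \<omega>\<bar> powr 2"
      using that(2)[of \<omega>] power_mono[of "\<bar>W \<omega>\<bar>" "\<bar>X \<omega>\<bar>" 2] by simp
  qed (use that(1) assms(2) in simp_all)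
  have bY: "\<And>\<omega>. \<bar>Y \<omega>\<bar> \<le> \<bar>X \<omega>\<bar>" using Yb by (simp add: abs_le_iff)
  have bZ: "\<And>\<omega>. \<bar>Z \<omega>\<bar> \<le> \<bar>X \<omega>\<bar>" using Zb by (simp add: abs_le_iff)
  have bX: "\<And>\<omega>. \<bar>X \<omega>\<bar> \<le> \<bar>X \<omega>\<bar>" by simp
  have bA: "\<And>\<omega>. \<bar>\<bar>X \<omega>\<bar>\<bar> \<le> \<bar>X \<omega>\<bar>" by simp
  have Am: "(\<lambda>\<omega>. \<bar>X \<omega>\<bar>) \<in> borel_measurable M" by measurable
  note iY = i1[OF Ym bY] i2[OF Ym bY]
  note iZ = i1[OF Zm bZ] i2[OF Zm bZ]
  note iX = i1[OF Xm bX] i2[OF Xm bX]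
  note iA = i1[OF Am bA] i2[OF Am bA]
  define ey where "ey = (\<integral>\<omega>. Y \<omega> \<partial>M)"
  define ez where "ez = (\<integral>\<omega>. Z \<omega> \<partial>M)"
  have ey0: "0 \<le> ey" unfolding ey_def using Yb by (intro Bochner_Integration.integral_nonneg) auto
  have ez0: "0 \<le> ez" unfolding ez_def using Zb by (intro Bochner_Integration.integral_nonneg) auto
  have EX: "(\<integral>\<omega>. X \<omega> \<partial>M) = ey - ez"
    unfolding ey_def ez_def XYZ using iY iZ by simp
  have EA: "(\<integral>\<omega>. \<bar>X \<omega>\<bar> \<partial>M) = ey + ez"
    unfolding ey_def ez_def aX using iY iZ by simp
  have EX2: "(\<integral>\<omega>. (X \<omega>)^2 \<partial>M) = (\<integral>\<omega>. (Y \<omega>)^2 \<partial>M) + (\<integral>\<omega>. (Z \<omega>)^2 \<partial>M)"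
    unfolding X2 using iY iZ by simp
  have EA2: "(\<integral>\<omega>. \<bar>X \<omega>\<bar>^2 \<partial>M) = (\<integral>\<omega>. (Y \<omega>)^2 \<partial>M) + (\<integral>\<omega>. (Z \<omega>)^2 \<partial>M)"
    unfolding aX2 EX2 ..
  have VX: "Var M X = Var M Y + Var M Z + 2 * ey * ez"
    unfolding Var_def EX EX2 ey_def[symmetric] ez_def[symmetric] by (simp add: power2_eq_square algebra_simps)
  have VA: "Var M (\<lambda>\<omega>. \<bar>X \<omega>\<bar>) = Var M Y + Var M Z - 2 * ey * ez"
    unfolding Var_def EA EA2 ey_def[symmetric] ez_def[symmetric] by (simp add: power2_eq_square algebra_simps)
  have VA0: "0 \<le> Var M (\<lambda>\<omega>. \<bar>X \<omega>\<bar>)" using P.Var_nonneg[OF iA] .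
  have low: "Var M Y + Var M Z \<le> Var M X" using VX ey0 ez0 by simp
  have up: "Var M X \<le> 2 * (Var M Y + Var M Z)" using VX VA VA0 by simp
  have rr: "1/(r/2) = 2/r" "1/(s/2) = 2/s" by simp_all
  have s1: "Var M (\<lambda>\<omega>. Y \<omega> powr (r/2)) powr (1/(r/2)) \<le> Var M Y"
    by (rule P.main_small[OF Xi _ Ym]) (use Yb assms in auto)
  have s2: "Var M (\<lambda>\<omega>. Z \<omega> powr (r/2)) powr (1/(r/2)) \<le> Var M Z"
    by (rule P.main_small[OF Xi _ Zm]) (use Zb assms in auto)
  have l1: "Var M Y \<le> Var M (\<lambda>\<omega>. Y \<omega> powr (s/2)) powr (1/(s/2))"
    by (rule P.main_large[OF Xi _ Ym]) (use Yb assms in auto)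
  have l2: "Var M Z \<le> Var M (\<lambda>\<omega>. Z \<omega> powr (s/2)) powr (1/(s/2))"
    by (rule P.main_large[OF Xi _ Zm]) (use Zb assms in auto)
  show ?thesis
    using s1 s2 l1 l2 low up unfolding rr Y_def Z_def by (smt (verit))
qed


end
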